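(* Let $J,\mathbf{J},\mathbf{S},\mathbf{U},\mathbf{V},\mathbf{K}$ and $\mathbf{\Xi}$ be as in one of the three cases (continuous, semi-discrete, fully discrete) of the NLS solution construction, with $\mathbf{K}$ invertible, and let $\mathbf{\Pi}$ be a constant invertible $n\times n$ matrix with $\mathbf{J}\mathbf{\Pi}=-\mathbf{\Pi}\mathbf{J}$. Define $\mathbf{S}'=-\mathbf{\Pi}\mathbf{S}\mathbf{\Pi}^{-1}$ in the continuous case and $\mathbf{S}'=\mathbf{\Pi}\mathbf{S}^{-1}\mathbf{\Pi}^{-1}$ in the discrete cases, and $\mathbf{U}'=-\mathbf{U}\mathbf{K}^{-1}\mathbf{\Pi}^{-1}$, $\mathbf{V}'=\mathbf{\Pi}\mathbf{K}^{-1}\mathbf{V}$, $\mathbf{K}'=\mathbf{\Pi}\mathbf{K}^{-1}\mathbf{\Pi}^{-1}$. Then $(\mathbf{J},\mathbf{S}',\mathbf{U}',\mathbf{V}',\mathbf{K}')$ satisfy the same commutation relations and the same Sylvester equation as the original data, the associated matrix is $\mathbf{\Xi}'=\mathbf{\Pi}\mathbf{\Xi}^{-1}\mathbf{\Pi}^{-1}$, and the associated functions satisfy $\mathcal{U}'=\mathcal{U}$ and $\mathcal{D}'=\mathcal{D}+\mathbf{U}\mathbf{K}^{-1}\mathbf{V}$ (the latter summand being constant).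
   Context: Setting: $J\in\mathrm{Mat}(m,m,\mathbb{C})$ with $J^2=I_m$; constant complex $\mathbf{J},\mathbf{S},\mathbf{K}$ ($n\times n$), $\mathbf{U}$ ($m\times n$), $\mathbf{V}$ ($n\times m$) with $\mathbf{J}^2=\mathbf{I}$, $\mathbf{J}\mathbf{S}=\mathbf{S}\mathbf{J}$, $J\mathbf{U}=-\mathbf{U}\mathbf{J}$, $\mathbf{J}\mathbf{V}=\mathbf{V}J$, $\mathbf{J}\mathbf{K}=-\mathbf{K}\mathbf{J}$. Sylvester equation: $\mathbf{S}\mathbf{K}+\mathbf{K}\mathbf{S}=\mathbf{V}\mathbf{U}$ (continuous) or $\mathbf{S}^{-1}\mathbf{K}-\mathbf{K}\mathbf{S}=\mathbf{V}\mathbf{U}$ (discrete, $\mathbf{S}$ invertible). $\mathbf{\Xi}=e^{-x\mathbf{S}-\mathrm{i}t\mathbf{S}^2\mathbf{J}}$ (continuous), $\mathbf{\Xi}=\mathbf{S}^xe^{-\mathrm{i}t(\mathbf{S}+\mathbf{S}^{-1}-2\mathbf{I})\mathbf{J}}$ (semi-discrete), $\mathbf{\Xi}=\mathbf{S}^x[(\mathbf{I}+\mathrm{i}\mathbf{J}(\mathbf{I}-\mathbf{S}^{-1}))(\mathbf{I}-\mathrm{i}\mathbf{J}(\mathbf{I}-\mathbf{S}))^{-1}]^t$ (fully discrete). Associated functions: $\mathcal{U}=\mathbf{U}(\mathbf{\Xi}^{-1}-\mathbf{K}\mathbf{\Xi}\mathbf{K})^{-1}\mathbf{V}$, $\mathcal{D}=\mathbf{U}\mathbf{\Xi}\mathbf{K}(\mathbf{\Xi}^{-1}-\mathbf{K}\mathbf{\Xi}\mathbf{K})^{-1}\mathbf{V}$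 (assumed to exist); primed quantities are built the same way from primed data. *)

theory Defs
  imports "HOL-Analysis.Analysis"
begin

primrec mpow :: "complex^'n^'n \<Rightarrow> nat \<Rightarrow> complex^'n^'n" where
  "mpow A 0 = mat 1"
| "mpow A (Suc k) = A ** mpow A k"

definition mpowi :: "complex^'n^'n \<Rightarrow> int \<Rightarrow> complex^'n^'n" where
  "mpowi A k = (if 0 \<le> k then mpow A (nat k) else mpow (matrix_inv A) (nat (- k)))"

definition mexp :: "complex^'n^'n \<Rightarrow> complex^'n^'n" where
  "mexp A = (\<Sum>k. (1 / fact k) *\<^sub>R mpow A k)"

definition csmul :: "complex \<Rightarrow> complex^'c^'r \<Rightarrow> complex^'c^'r" where
  "csmul c A = (\<chi> i j. c * A $ i $ j)"

datatype nls_case = Continuous | SemiDiscrete | FullyDiscrete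

fun admissible :: "nls_case \<Rightarrow> real \<Rightarrow> real \<Rightarrow> bool" where
  "admissible Continuous x t = True"
| "admissible SemiDiscrete x t = (x \<in> \<int>)"
| "admissible FullyDiscrete x t = (x \<in> \<int> \<and> t \<in> \<int>)"

text \<open>Standing invertibility requirements of each case (so that Xi is defined and invertible).\<close>
fun case_ok :: "nls_case \<Rightarrow> complex^'n^'n \<Rightarrow> complex^'n^'n \<Rightarrow> bool" where
  "case_ok Continuous JJ S = True"
| "case_ok SemiDiscrete JJ S = invertible S"
| "case_ok FullyDiscrete JJ S = (invertible S
      \<and> invertible (mat 1 - csmul \<i> (JJ ** (mat 1 - S)))
      \<and> invertible (mat 1 + csmul \<i> (JJ ** (mat 1 - matrix_inv S))))"

fun sylvester :: "nls_case \<Rightarrow> complex^'n^'n \<Rightarrow> complex^'n^'n \<Rightarrow> complex^'n^'m \<Rightarrow> complex^'m^'n \<Rightarrow> bool" where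
  "sylvester Continuous S K U V = (S ** K + K ** S = V ** U)"
| "sylvester SemiDiscrete S K U V = (matrix_inv S ** K - K ** S = V ** U)"
| "sylvester FullyDiscrete S K U V = (matrix_inv S ** K - K ** S = V ** U)"

fun Xi :: "nls_case \<Rightarrow> complex^'n^'n \<Rightarrow> complex^'n^'n \<Rightarrow> real \<Rightarrow> real \<Rightarrow> complex^'n^'n" where
  "Xi Continuous JJ S x t =
     mexp (csmul (- complex_of_real x) S + csmul (- \<i> * complex_of_real t) (S ** S ** JJ))"
| "Xi SemiDiscrete JJ S x t =
     mpowi S \<lfloor>x\<rfloor> ** mexp (csmul (- \<i> * complex_of_real t) ((S + matrix_inv S - mat 2) ** JJ))"
| "Xi FullyDiscrete JJ S x t =
     mpowi S \<lfloor>x\<rfloor> **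
     mpowi ((mat 1 + csmul \<i> (JJ ** (mat 1 - matrix_inv S)))
            ** matrix_inv (mat 1 - csmul \<i> (JJ ** (mat 1 - S)))) \<lfloor>t\<rfloor>"

definition nlsU :: "nls_case \<Rightarrow> complex^'n^'n \<Rightarrow> complex^'n^'n \<Rightarrow> complex^'n^'n
      \<Rightarrow> complex^'n^'m \<Rightarrow> complex^'m^'n \<Rightarrow> real \<Rightarrow> real \<Rightarrow> complex^'m^'m" where
  "nlsU c JJ S K U V x t =
     (let X = Xi c JJ S x t in U ** matrix_inv (matrix_inv X - K ** X ** K) ** V)"

definition nlsD :: "nls_case \<Rightarrow> complex^'n^'n \<Rightarrow> complex^'n^'n \<Rightarrow> complex^'n^'n
      \<Rightarrow> complex^'n^'m \<Rightarrow> complex^'m^'n \<Rightarrow> real \<Rightarrow> real \<Rightarrow> complex^'m^'m" where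
  "nlsD c JJ S K U V x t =
     (let X = Xi c JJ S x t in U ** X ** K ** matrix_inv (matrix_inv X - K ** X ** K) ** V)"

end

theory Submission
  imports Defs
begin


lemma mm_bilinear: "bilinear ((**) :: complex^'n^'m \<Rightarrow> complex^'k^'n \<Rightarrow> complex^'k^'m)"
  unfolding bilinear_def
  by (auto intro!: linearI simp: matrix_matrix_mult_def vec_eq_iff sum.distrib scaleR_sum_right
      algebra_simps mult_scaleR_left mult_scaleR_right)

lemma mm_bb: "bounded_bilinear ((**) :: complex^'n^'m \<Rightarrow> complex^'k^'n \<Rightarrow> complex^'k^'m)"
  using mm_bilinear bilinear_conv_bounded_bilinear by blast

lemma mm_neg_left: "(- A) ** (B::'a::ring_1^'k^'n) = - (A ** B)"
  by (simp add: matrix_matrix_mult_def vec_eq_iff sum_negf)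
lemma mm_neg_right: "(A::'a::ring_1^'n^'m) ** (- B) = - (A ** B)"
  by (simp add: matrix_matrix_mult_def vec_eq_iff sum_negf)
lemma mm_add_left: "(A + B) ** (C::'a::ring_1^'k^'n) = A ** C + B ** C"
  by (simp add: matrix_matrix_mult_def vec_eq_iff sum.distrib algebra_simps)
lemma mm_diff_left: "(A - B) ** (C::'a::ring_1^'k^'n) = A ** C - B ** C"
  by (simp add: matrix_matrix_mult_def vec_eq_iff sum_subtractf algebra_simps)
lemma mm_diff_right: "(A::'a::ring_1^'n^'m) ** (B - C) = A ** B - A ** C"
  by (simp add: matrix_matrix_mult_def vec_eq_iff sum_subtractf algebra_simps)



lemma Cauchy_product_sums_bb:
  fixes a :: "nat \<Rightarrow> 'a::banach" and b :: "nat \<Rightarrow> 'b::banach"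
    and prod :: "'a \<Rightarrow> 'b \<Rightarrow> 'c::real_normed_vector"
  assumes bb: "bounded_bilinear prod"
    and a: "summable (\<lambda>k. norm (a k))"
    and b: "summable (\<lambda>k. norm (b k))"
  shows "(\<lambda>k. \<Sum>i\<le>k. prod (a i) (b (k - i))) sums (prod (\<Sum>k. a k) (\<Sum>k. b k))"
proof -
  obtain K where K: "K > 0" "\<And>x y. norm (prod x y) \<le> norm x * norm y * K"
    using bounded_bilinear.pos_bounded[OF bb] by blast
  let ?S1 = "\<lambda>n::nat. {..<n} \<times> {..<n}"
  let ?S2 = "\<lambda>n::nat. {(i,j). i + j < n}"
  have S1_mono: "\<And>m n. m \<le> n \<Longrightarrow> ?S1 m \<subseteq> ?S1 n" by auto
  have S2_le_S1: "\<And>n. ?S2 n \<subseteq> ?S1 n" by auto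
  have S1_le_S2: "\<And>n. ?S1 (n div 2) \<subseteq> ?S2 n" by auto
  have finite_S1: "\<And>n. finite (?S1 n)" by simp
  with S2_le_S1 have finite_S2: "\<And>n. finite (?S2 n)" by (rule finite_subset)
  let ?g = "\<lambda>(i,j). prod (a i) (b j)"
  let ?f = "\<lambda>(i,j). norm (a i) * norm (b j) * K"
  have f_nonneg: "\<And>x. 0 \<le> ?f x" using K by auto
  then have norm_sum_f: "\<And>A. norm (sum ?f A) = sum ?f A"
    unfolding real_norm_def
    by (simp only: abs_of_nonneg sum_nonneg [rule_format])
  have eqg: "prod (\<Sum>k<n. a k) (\<Sum>k<n. b k) = sum ?g (?S1 n)" for n
  proof -
    have "prod (\<Sum>k<n. a k) (\<Sum>k<n. b k) = (\<Sum>i<n. \<Sum>j<n. prod (a i) (b j))"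
      unfolding bounded_bilinear.sum_left[OF bb] by (simp add: bounded_bilinear.sum_right[OF bb])
    then show ?thesis by (simp add: sum.cartesian_product)
  qed
  have "(\<lambda>n. prod (\<Sum>k<n. a k) (\<Sum>k<n. b k)) \<longlonglongrightarrow> prod (\<Sum>k. a k) (\<Sum>k. b k)"
    by (intro bounded_bilinear.tendsto[OF bb] summable_LIMSEQ summable_norm_cancel [OF a] summable_norm_cancel [OF b])
  then have 1: "(\<lambda>n. sum ?g (?S1 n)) \<longlonglongrightarrow> prod (\<Sum>k. a k) (\<Sum>k. b k)"
    by (simp only: eqg)
  have eqf: "(\<Sum>k<n. norm (a k)) * (\<Sum>k<n. norm (b k)) * K = sum ?f (?S1 n)" for n
    apply (simp add: sum_product sum_distrib_right sum.cartesian_product[symmetric] mult.assoc sum_distrib_left)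
    by (rule sum.swap)
  have "(\<lambda>n. (\<Sum>k<n. norm (a k)) * (\<Sum>k<n. norm (b k)) * K) \<longlonglongrightarrow> (\<Sum>k. norm (a k)) * (\<Sum>k. norm (b k)) * K"
    using a b by (intro tendsto_mult tendsto_const summable_LIMSEQ)
  then have "(\<lambda>n. sum ?f (?S1 n)) \<longlonglongrightarrow> (\<Sum>k. norm (a k)) * (\<Sum>k. norm (b k)) * K"
    by (simp only: eqf)
  then have "convergent (\<lambda>n. sum ?f (?S1 n))"
    by (rule convergentI)
  then have Cauchy: "Cauchy (\<lambda>n. sum ?f (?S1 n))"
    by (rule convergent_Cauchy)
  have "Zfun (\<lambda>n. sum ?f (?S1 n - ?S2 n)) sequentially"
  proof (rule ZfunI, simp only: eventually_sequentially norm_sum_f)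
    fix r :: real
    assume r: "0 < r"
    from CauchyD [OF Cauchy r] obtain N
      where "\<forall>m\<ge>N. \<forall>n\<ge>N. norm (sum ?f (?S1 m) - sum ?f (?S1 n)) < r" ..
    then have "\<And>m n. N \<le> n \<Longrightarrow> n \<le> m \<Longrightarrow> norm (sum ?f (?S1 m - ?S1 n)) < r"
      by (simp only: sum_diff finite_S1 S1_mono)
    then have N: "\<And>m n. N \<le> n \<Longrightarrow> n \<le> m \<Longrightarrow> sum ?f (?S1 m - ?S1 n) < r"
      by (simp only: norm_sum_f)
    show "\<exists>N. \<forall>n\<ge>N. sum ?f (?S1 n - ?S2 n) < r"
    proof (intro exI allI impI)
      fix n
      assume "2 * N \<le> n"
      then have n: "N \<le> n div 2" by simp
      have "sum ?f (?S1 n - ?S2 n) \<le> sum ?f (?S1 n - ?S1 (n div 2))"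
        by (intro sum_mono2 finite_Diff finite_S1 f_nonneg Diff_mono subset_refl S1_le_S2)
      also have "\<dots> < r"
        using n div_le_dividend by (rule N)
      finally show "sum ?f (?S1 n - ?S2 n) < r" .
    qed
  qed
  then have "Zfun (\<lambda>n. sum ?g (?S1 n - ?S2 n)) sequentially"
    apply (rule Zfun_le [rule_format])
    apply (simp only: norm_sum_f)
    apply (rule order_trans [OF norm_sum sum_mono])
    apply (auto simp add: K)
    done
  then have 2: "(\<lambda>n. sum ?g (?S1 n) - sum ?g (?S2 n)) \<longlonglongrightarrow> 0"
    unfolding tendsto_Zfun_iff diff_0_right
    by (simp only: sum_diff finite_S1 S2_le_S1)
  with 1 have "(\<lambda>n. sum ?g (?S2 n)) \<longlonglongrightarrow> prod (\<Sum>k. a k) (\<Sum>k. b k)"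
    by (rule Lim_transform2)
  then show ?thesis
    by (simp only: sums_def sum.triangle_reindex)
qed



type_synonym 'n cm = "complex^'n^'n"

lemma inv_r: "invertible (A::'a::field^'n^'n) \<Longrightarrow> A ** matrix_inv A = mat 1"
  unfolding matrix_inv_def invertible_def by (rule someI2_ex) auto
lemma inv_l: "invertible (A::'a::field^'n^'n) \<Longrightarrow> matrix_inv A ** A = mat 1"
  unfolding matrix_inv_def invertible_def by (rule someI2_ex) auto

lemma cancel1: "invertible (A::'a::field^'n^'n) \<Longrightarrow> X ** A ** matrix_inv A = X"
  by (metis inv_r matrix_mul_assoc matrix_mul_rid)
lemma cancel2: "invertible (A::'a::field^'n^'n) \<Longrightarrow> X ** matrix_inv A ** A = X"
  by (metis inv_l matrix_mul_assoc matrix_mul_rid)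

lemma inv_unique: "(A::'a::field^'n^'n) ** B = mat 1 \<Longrightarrow> matrix_inv A = B"
proof -
  assume h: "A ** B = mat 1"
  then have i: "invertible A" using invertible_right_inverse by blast
  have "matrix_inv A = matrix_inv A ** (A ** B)" using h by simp
  also have "\<dots> = B" by (simp add: matrix_mul_assoc inv_l[OF i])
  finally show ?thesis .
qed

lemma inv_unique': "(B::'a::field^'n^'n) ** A = mat 1 \<Longrightarrow> matrix_inv A = B"
  using inv_unique matrix_left_right_inverse by blast

lemma invertible_inv: "invertible (A::'a::field^'n^'n) \<Longrightarrow> invertible (matrix_inv A)"
  using inv_l invertible_right_inverse by blast

lemma inv_inv: "invertible (A::'a::field^'n^'n) \<Longrightarrow> matrix_inv (matrix_inv A) = A"
  by (rule inv_unique) (rule inv_l)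

lemma inv_mult: "invertible (A::'a::field^'n^'n) \<Longrightarrow> invertible (B::'a^'n^'n) \<Longrightarrow>
   matrix_inv (A ** B) = matrix_inv B ** matrix_inv A"
  apply (rule inv_unique)
  by (simp add: matrix_mul_assoc cancel1 inv_r)

lemma invertible_neg: "invertible (A::'a::field^'n^'n) \<Longrightarrow> invertible (-A)"
  by (metis inv_r invertible_right_inverse mm_neg_left mm_neg_right minus_minus)

lemma inv_neg: "invertible (A::'a::field^'n^'n) \<Longrightarrow> matrix_inv (-A) = - matrix_inv A"
  by (metis inv_r inv_unique mm_neg_left mm_neg_right minus_minus)


lemma mat1_invertible: "invertible (mat 1 :: 'a::field^'n^'n)"
  using invertible_right_inverse matrix_mul_lid by blast

lemma mpow_add: "mpow A (i + j) = mpow A i ** mpow A j"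
  by (induct i) (simp_all add: matrix_mul_assoc)

lemma mpow_comm: "(S::complex^'n^'n) ** A = A ** S \<Longrightarrow> S ** mpow A k = mpow A k ** S"
  by (induct k) (simp_all add: matrix_mul_assoc, metis matrix_mul_assoc)

lemma mpow_Suc': "mpow A (Suc k) = mpow A k ** A"
  using mpow_comm[of A A k] by simp

lemma mpow_conj: assumes "invertible (P::complex^'n^'n)" shows "mpow (P ** A ** matrix_inv P) k = P ** mpow A k ** matrix_inv P"
  apply (induct k)
   apply (simp add: inv_r[OF assms])
  apply (simp add: matrix_mul_assoc cancel2[OF assms])
  done

lemma mpow_neg: "mpow (- A) k = ((-1::real)^k) *\<^sub>R mpow A k"
  by (induct k) (simp_all add: mm_neg_left matrix_scalar_ac scalar_matrix_assoc)

lemma mpow_invertible: "invertible A \<Longrightarrow> invertible (mpow A k)"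
  by (induct k) (simp_all add: mat1_invertible invertible_mult)

lemma mpow_inv: "invertible A \<Longrightarrow> mpow (matrix_inv A) k = matrix_inv (mpow A k)"
proof (induct k)
  case 0 then show ?case by (simp add: inv_unique)
next
  case (Suc k)
  have "mpow (matrix_inv A) (Suc k) = mpow (matrix_inv A) k ** matrix_inv A" by (rule mpow_Suc')
  also have "\<dots> = matrix_inv (A ** mpow A k)" using Suc by (simp add: inv_mult mpow_invertible)
  finally show ?case by simp
qed



lemma mpow_norm_bound: "\<exists>K\<ge>0. \<forall>k. norm (mpow (A::complex^'n^'n) k) \<le> norm (mat 1 :: complex^'n^'n) * K^k"
proof -
  obtain C where C: "C > 0" "\<And>x y. norm ((x::complex^'n^'n) ** (y::complex^'n^'n)) \<le> norm x * norm y * C"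
    using bounded_bilinear.pos_bounded[OF mm_bb] by blast
  have "norm (mpow A k) \<le> norm (mat 1 :: complex^'n^'n) * (norm A * C)^k" for k
  proof (induct k)
    case 0 then show ?case by simp
  next
    case (Suc k)
    have "norm (mpow A (Suc k)) \<le> norm A * norm (mpow A k) * C" using C(2)[of A "mpow A k"] by simp
    also have "\<dots> \<le> norm A * (norm (mat 1 :: complex^'n^'n) * (norm A * C)^k) * C"
      using Suc C by (intro mult_right_mono mult_left_mono) auto
    finally show ?case by (simp add: algebra_simps)
  qed
  then show ?thesis using C by (intro exI[of _ "norm A * C"]) auto
qed

lemma summable_mexp: "summable (\<lambda>k. norm ((1 / fact k) *\<^sub>R mpow (A::complex^'n^'n) k))"
proof -
  obtain K where K: "K \<ge> 0" "\<And>k. norm (mpow A k) \<le> norm (mat 1 :: complex^'n^'n) * K^k"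
    using mpow_norm_bound[of A] by blast
  have s: "summable (\<lambda>k. norm (mat 1 :: complex^'n^'n) * (inverse (fact k) * K^k))"
    by (intro summable_mult summable_exp)
  show ?thesis
  proof (rule summable_comparison_test'[OF s])
    fix k :: nat
    have "norm (norm ((1 / fact k) *\<^sub>R mpow A k)) = (1 / fact k) * norm (mpow A k)" by simp
    also have "\<dots> \<le> (1 / fact k) * (norm (mat 1 :: complex^'n^'n) * K^k)"
      using K by (intro mult_left_mono) auto
    finally show "norm (norm ((1 / fact k) *\<^sub>R mpow A k)) \<le> norm (mat 1 :: complex^'n^'n) * (inverse (fact k) * K^k)"
      by (simp add: field_simps)
  qed
qed

lemma summable_mexp': "summable (\<lambda>k. (1 / fact k) *\<^sub>R mpow (A::complex^'n^'n) k)"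
  using summable_norm_cancel[OF summable_mexp] .

lemma mexp_lin:
  fixes L :: "complex^'n^'n \<Rightarrow> complex^'n^'n"
  assumes L: "bounded_linear L" and h: "\<And>k. L (mpow A k) = mpow B k"
  shows "L (mexp A) = mexp B"
  unfolding mexp_def
  by (simp add: bounded_linear.suminf[OF L summable_mexp'] linear_cmul[OF bounded_linear.linear[OF L]] h)

lemma mexp_conj:
  assumes P: "invertible (P::complex^'n^'n)"
  shows "mexp (P ** A ** matrix_inv P) = P ** mexp A ** matrix_inv P"
proof -
  have L: "bounded_linear (\<lambda>X::complex^'n^'n. P ** X ** matrix_inv P)"
    using bounded_linear_compose[OF bounded_bilinear.bounded_linear_left[OF mm_bb]
        bounded_bilinear.bounded_linear_right[OF mm_bb]] by blast
  show ?thesis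
    by (rule mexp_lin[OF L, symmetric]) (simp add: mpow_conj[OF P])
qed

lemma mexp_comm:
  assumes SA: "(S::complex^'n^'n) ** A = A ** S"
  shows "S ** mexp A = mexp A ** S"
proof -
  have L1: "bounded_linear (\<lambda>X::complex^'n^'n. S ** X)"
    by (rule bounded_bilinear.bounded_linear_right[OF mm_bb])
  have L2: "bounded_linear (\<lambda>X::complex^'n^'n. X ** S)"
    by (rule bounded_bilinear.bounded_linear_left[OF mm_bb])
  show ?thesis
    unfolding mexp_def
    by (simp add: bounded_linear.suminf[OF L1 summable_mexp'] bounded_linear.suminf[OF L2 summable_mexp']
        linear_cmul[OF bounded_linear.linear[OF L1]] linear_cmul[OF bounded_linear.linear[OF L2]] mpow_comm[OF SA])
qed

lemma alt_sum: "(\<Sum>i\<le>k. (-1::real)^i / (fact i * fact (k - i))) = (if k = 0 then 1 else 0)"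
proof (cases "k = 0")
  case True then show ?thesis by simp
next
  case False
  have "(\<Sum>i\<le>k. (-1::real)^i / (fact i * fact (k - i))) = (\<Sum>i\<le>k. (-1)^i * of_nat (k choose i)) / fact k"
    by (simp add: sum_divide_distrib binomial_fact)
  also have "\<dots> = 0" using False choose_alternating_sum[of k] by simp
  finally show ?thesis using False by simp
qed

lemma mexp_neg: "mexp (- A) ** mexp (A::complex^'n^'n) = mat 1"
proof -
  have cs: "(\<lambda>k. \<Sum>i\<le>k. ((1 / fact i) *\<^sub>R mpow (-A) i) ** ((1 / fact (k - i)) *\<^sub>R mpow A (k - i)))
      sums (mexp (-A) ** mexp A)"
    unfolding mexp_def
    by (rule Cauchy_product_sums_bb[OF mm_bb summable_mexp summable_mexp])
  have t: "(\<Sum>i\<le>k. ((1 / fact i) *\<^sub>R mpow (-A) i) ** ((1 / fact (k - i)) *\<^sub>R mpow A (k - i)))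
      = (if k = 0 then mat 1 else 0)" for k
  proof -
    have "(\<Sum>i\<le>k. ((1 / fact i) *\<^sub>R mpow (-A) i) ** ((1 / fact (k - i)) *\<^sub>R mpow A (k - i)))
        = (\<Sum>i\<le>k. ((-1::real)^i / (fact i * fact (k - i))) *\<^sub>R mpow A k)"
    proof (rule sum.cong[OF refl])
      fix i assume "i \<in> {..k}"
      then have "mpow A i ** mpow A (k - i) = mpow A k" by (simp add: mpow_add[symmetric])
      then show "((1 / fact i) *\<^sub>R mpow (-A) i) ** ((1 / fact (k - i)) *\<^sub>R mpow A (k - i))
          = ((-1::real)^i / (fact i * fact (k - i))) *\<^sub>R mpow A k"
        by (simp add: mpow_neg matrix_scalar_ac scalar_matrix_assoc[symmetric])
    qed
    also have "\<dots> = (\<Sum>i\<le>k. (-1::real)^i / (fact i * fact (k - i))) *\<^sub>R mpow A k"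
      by (simp add: scaleR_sum_left)
    also have "\<dots> = (if k = 0 then mat 1 else 0)"
      by (simp add: alt_sum)
    finally show ?thesis .
  qed
  have "(\<lambda>k. if k = 0 then mat 1 else (0::complex^'n^'n)) sums mat 1"
    using sums_single[of 0 "\<lambda>_. mat 1 :: complex^'n^'n"] by simp
  then show ?thesis using cs unfolding t using sums_unique2 by blast
qed

lemma mexp_invertible: "invertible (mexp (A::complex^'n^'n))"
  using mexp_neg invertible_left_inverse by blast

lemma mexp_inv: "matrix_inv (mexp (A::complex^'n^'n)) = mexp (-A)"
  by (rule inv_unique') (rule mexp_neg)



lemma csmul_left: "csmul c A ** (B::complex^'k^'n) = csmul c (A ** B)"
  by (simp add: csmul_def matrix_matrix_mult_def vec_eq_iff sum_distrib_left mult.assoc)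
lemma csmul_right: "(A::complex^'n^'m) ** csmul c B = csmul c (A ** B)"
  by (simp add: csmul_def matrix_matrix_mult_def vec_eq_iff sum_distrib_left algebra_simps)
lemma csmul_add: "csmul c (A + B) = csmul c A + csmul c B"
  by (simp add: csmul_def vec_eq_iff algebra_simps)
lemma csmul_diff: "csmul c (A - B) = csmul c A - csmul c B"
  by (simp add: csmul_def vec_eq_iff algebra_simps)
lemma csmul_neg: "csmul c (- A) = - csmul c A"
  by (simp add: csmul_def vec_eq_iff)
lemma csmul_negc: "csmul (- c) A = - csmul c A"
  by (simp add: csmul_def vec_eq_iff)
lemma mat2: "mat 2 = mat 1 + (mat 1 :: 'a::ring_1^'n^'n)"
  by (simp add: mat_def vec_eq_iff)

lemma mat2_left: "mat 2 ** (A::complex^'k^'n) = csmul 2 A"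
  by (simp add: mat_def matrix_matrix_mult_def csmul_def vec_eq_iff if_distrib if_distribR cong: if_cong)
lemma mat2_right: "(A::complex^'n^'k) ** mat 2 = csmul 2 A"
  by (simp add: mat_def matrix_matrix_mult_def csmul_def vec_eq_iff if_distrib if_distribR mult.commute cong: if_cong)

lemmas csmul_simps = csmul_left csmul_right csmul_add csmul_diff csmul_neg csmul_negc

lemma comm_inv: "invertible (A::complex^'n^'n) \<Longrightarrow> S ** A = A ** S \<Longrightarrow> S ** matrix_inv A = matrix_inv A ** S"
  by (metis cancel1 inv_l matrix_mul_assoc matrix_mul_lid)

lemma anticomm_inv: assumes "invertible (A::complex^'n^'n)" "J ** A = - (A ** J)"
  shows "J ** matrix_inv A = - (matrix_inv A ** J)"
proof -
  have "matrix_inv A ** J = matrix_inv A ** (J ** A) ** matrix_inv A"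
    by (simp add: matrix_mul_assoc cancel1[OF assms(1)])
  also have "\<dots> = - (J ** matrix_inv A)" using assms
    by (simp add: mm_neg_left mm_neg_right matrix_mul_assoc inv_l)
  finally show ?thesis by simp
qed

lemma mpowi_invertible: "invertible (A::complex^'n^'n) \<Longrightarrow> invertible (mpowi A k)"
  by (simp add: mpowi_def mpow_invertible invertible_inv)

lemma mpowi_inv: assumes "invertible (A::complex^'n^'n)"
  shows "mpowi (matrix_inv A) k = matrix_inv (mpowi A k)"
  using assms by (simp add: mpowi_def mpow_inv inv_inv invertible_inv mpow_invertible)

lemma mpowi_conj: assumes "invertible (P::complex^'n^'n)" "invertible A"
  shows "mpowi (P ** A ** matrix_inv P) k = P ** mpowi A k ** matrix_inv P"
proof -
  have "matrix_inv (P ** A ** matrix_inv P) = P ** matrix_inv A ** matrix_inv P"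
    using assms by (simp add: inv_mult invertible_mult invertible_inv inv_inv matrix_mul_assoc)
  then show ?thesis using assms by (simp add: mpowi_def mpow_conj)
qed

lemma mpowi_comm: assumes "invertible (A::complex^'n^'n)" "S ** A = A ** S"
  shows "S ** mpowi A k = mpowi A k ** S"
  using assms by (simp add: mpowi_def mpow_comm comm_inv)

lemma conj_inv_comm:
  assumes P: "invertible (P::complex^'n^'n)" and M: "invertible M" and E: "invertible E"
    and ME: "M ** E = E ** M"
  shows "P ** matrix_inv M ** matrix_inv P ** (P ** matrix_inv E ** matrix_inv P)
       = P ** matrix_inv (M ** E) ** matrix_inv P"
proof -
  have "matrix_inv (M ** E) = matrix_inv M ** matrix_inv E"
    using ME M E by (simp add: inv_mult)
  then show ?thesis using P by (simp add: matrix_mul_assoc cancel2)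
qed



theorem mainTheorem4:
  fixes c :: nls_case
    and J :: "complex^'m^'m"
    and JJ S K Pi :: "complex^'n^'n"
    and U :: "complex^'n^'m"
    and V :: "complex^'m^'n"
  assumes J2: "J ** J = mat 1"
    and JJ2: "JJ ** JJ = mat 1"
    and JS: "JJ ** S = S ** JJ"
    and JU: "J ** U = - (U ** JJ)"
    and JV: "JJ ** V = V ** J"
    and JK: "JJ ** K = - (K ** JJ)"
    and syl: "sylvester c S K U V"
    and ok: "case_ok c JJ S"
    and Kinv: "invertible K"
    and Piinv: "invertible Pi"
    and JPi: "JJ ** Pi = - (Pi ** JJ)"
  defines "S' \<equiv> (if c = Continuous then - (Pi ** S ** matrix_inv Pi)
                 else Pi ** matrix_inv S ** matrix_inv Pi)"
    and "U' \<equiv> - (U ** matrix_inv K ** matrix_inv Pi)"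
    and "V' \<equiv> Pi ** matrix_inv K ** V"
    and "K' \<equiv> Pi ** matrix_inv K ** matrix_inv Pi"
  shows "JJ ** S' = S' ** JJ \<and> J ** U' = - (U' ** JJ) \<and> JJ ** V' = V' ** J
         \<and> JJ ** K' = - (K' ** JJ)
         \<and> sylvester c S' K' U' V' \<and> case_ok c JJ S'
         \<and> (\<forall>x t. admissible c x t \<longrightarrow>
               Xi c JJ S' x t = Pi ** matrix_inv (Xi c JJ S x t) ** matrix_inv Pi)
         \<and> (\<forall>x t. admissible c x t
               \<and> invertible (matrix_inv (Xi c JJ S x t) - K ** Xi c JJ S x t ** K) \<longrightarrow>
               nlsU c JJ S' K' U' V' x t = nlsU c JJ S K U V x t
             \<and> nlsD c JJ S' K' U' V' x t = nlsD c JJ S K U V x t + U ** matrix_inv K ** V)"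
proof -
  let ?Pi = "matrix_inv Pi" and ?Ki = "matrix_inv K"
  have Pi1: "Pi ** ?Pi = mat 1" "?Pi ** Pi = mat 1" using Piinv by (simp_all add: inv_r inv_l)
  have K1: "K ** ?Ki = mat 1" "?Ki ** K = mat 1" using Kinv by (simp_all add: inv_r inv_l)
  have Pic: "X ** Pi ** ?Pi = X" "X ** ?Pi ** Pi = X" for X :: "complex^'n^'k"
    using Piinv by (simp_all add: cancel1 cancel2)
  have Kc: "X ** K ** ?Ki = X" "X ** ?Ki ** K = X" for X :: "complex^'n^'k"
    using Kinv by (simp_all add: cancel1 cancel2)
  have JPii: "JJ ** ?Pi = - (?Pi ** JJ)" by (rule anticomm_inv[OF Piinv JPi])
  have JKi: "JJ ** ?Ki = - (?Ki ** JJ)" by (rule anticomm_inv[OF Kinv JK])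
  have pushX: "X ** JJ ** Pi = - (X ** Pi ** JJ)" "X ** JJ ** ?Pi = - (X ** ?Pi ** JJ)"
     "X ** JJ ** K = - (X ** K ** JJ)" "X ** JJ ** ?Ki = - (X ** ?Ki ** JJ)"
     "X ** JJ ** S = X ** S ** JJ" "X ** JJ ** V = X ** V ** J"
     for X :: "complex^'n^'k"
    by (simp_all add: matrix_mul_assoc[symmetric] JPi JPii JK JKi JS JV mm_neg_right)
  have pushU: "Y ** J ** U = - (Y ** U ** JJ)" for Y :: "complex^'m^'k"
    by (simp add: matrix_mul_assoc[symmetric] JU mm_neg_right)
  have JJc: "X ** JJ ** JJ = X" for X :: "complex^'n^'k"
    by (simp add: matrix_mul_assoc[symmetric] JJ2)
  note push = JPi JPii JK JKi JS JV JU pushX pushU JJ2 JJc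
  note basic = matrix_mul_assoc mm_neg_left mm_neg_right mm_add_left matrix_add_ldistrib
     mm_diff_left mm_diff_right Pi1 K1 Pic Kc
  have g1: "JJ ** S' = S' ** JJ"
  proof (cases "c = Continuous")
    case True then show ?thesis unfolding S'_def by (simp add: basic push)
  next
    case False
    then have Si: "invertible S" using ok by (cases c) auto
    have JSi: "JJ ** matrix_inv S = matrix_inv S ** JJ" by (rule comm_inv[OF Si JS])
    have JSi': "X ** JJ ** matrix_inv S = X ** matrix_inv S ** JJ" for X :: "complex^'n^'k"
      by (simp add: matrix_mul_assoc[symmetric] JSi)
    show ?thesis using False unfolding S'_def by (simp add: basic push JSi JSi')
  qed
  have g2: "J ** U' = - (U' ** JJ)" unfolding U'_def by (simp add: basic push)
  have g3: "JJ ** V' = V' ** J" unfolding V'_def by (simp add: basic push)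
  have g4: "JJ ** K' = - (K' ** JJ)" unfolding K'_def by (simp add: basic push)
  have g5: "sylvester c S' K' U' V'"
  proof (cases c)
    case Continuous
    then have VU: "V ** U = S ** K + K ** S" using syl by simp
    have VU': "X ** V ** U = X ** (S ** K + K ** S)" for X :: "complex^'n^'k"
      by (simp add: matrix_mul_assoc[symmetric] VU)
    show ?thesis using Continuous unfolding S'_def K'_def U'_def V'_def
      by (simp add: basic VU')
  next
    case SemiDiscrete
    then have VU: "V ** U = matrix_inv S ** K - K ** S" using syl by simp
    have VU': "X ** V ** U = X ** (matrix_inv S ** K - K ** S)" for X :: "complex^'n^'k"
      by (simp add: matrix_mul_assoc[symmetric] VU)
    have Si: "invertible S" using ok SemiDiscrete by simp
    have iS': "matrix_inv (Pi ** matrix_inv S ** ?Pi) = Pi ** S ** ?Pi"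
      using Si Piinv by (simp add: inv_mult invertible_mult invertible_inv inv_inv matrix_mul_assoc)
    show ?thesis using SemiDiscrete unfolding S'_def K'_def U'_def V'_def
      by (simp add: iS' basic VU')
  next
    case FullyDiscrete
    then have VU: "V ** U = matrix_inv S ** K - K ** S" using syl by simp
    have VU': "X ** V ** U = X ** (matrix_inv S ** K - K ** S)" for X :: "complex^'n^'k"
      by (simp add: matrix_mul_assoc[symmetric] VU)
    have Si: "invertible S" using ok FullyDiscrete by simp
    have iS': "matrix_inv (Pi ** matrix_inv S ** ?Pi) = Pi ** S ** ?Pi"
      using Si Piinv by (simp add: inv_mult invertible_mult invertible_inv inv_inv matrix_mul_assoc)
    show ?thesis using FullyDiscrete unfolding S'_def K'_def U'_def V'_def
      by (simp add: iS' basic VU')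
  qed
  have disc: "c \<noteq> Continuous \<Longrightarrow> invertible S" using ok by (cases c) auto
  have JSi: "c \<noteq> Continuous \<Longrightarrow> JJ ** matrix_inv S = matrix_inv S ** JJ"
    using comm_inv[OF _ JS] disc by blast
  have JSi': "c \<noteq> Continuous \<Longrightarrow> X ** JJ ** matrix_inv S = X ** matrix_inv S ** JJ" for X :: "complex^'n^'k"
    using JSi by (simp add: matrix_mul_assoc[symmetric])
  have iS': "c \<noteq> Continuous \<Longrightarrow> matrix_inv (Pi ** matrix_inv S ** ?Pi) = Pi ** S ** ?Pi"
    using disc Piinv by (simp add: inv_mult invertible_mult invertible_inv inv_inv matrix_mul_assoc)
  have S'inv: "c \<noteq> Continuous \<Longrightarrow> invertible S'"
    unfolding S'_def using disc Piinv by (simp add: invertible_mult invertible_inv)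
  have A1: "c \<noteq> Continuous \<Longrightarrow> mat 1 - csmul \<i> (JJ ** (mat 1 - S'))
      = Pi ** (mat 1 + csmul \<i> (JJ ** (mat 1 - matrix_inv S))) ** ?Pi"
    unfolding S'_def by (simp add: basic push csmul_simps JSi')
  have A2: "c \<noteq> Continuous \<Longrightarrow> mat 1 + csmul \<i> (JJ ** (mat 1 - matrix_inv S'))
      = Pi ** (mat 1 - csmul \<i> (JJ ** (mat 1 - S))) ** ?Pi"
    unfolding S'_def by (simp add: basic push csmul_simps JSi' iS')
  have g6: "case_ok c JJ S'"
  proof (cases c)
    case Continuous then show ?thesis by simp
  next
    case SemiDiscrete then show ?thesis using S'inv by simp
  next
    case FullyDiscrete
    then show ?thesis using S'inv A1 A2 ok Piinv by (simp add: invertible_mult invertible_inv)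
  qed
  have g7: "Xi c JJ S' x t = Pi ** matrix_inv (Xi c JJ S x t) ** ?Pi \<and> invertible (Xi c JJ S x t)" for x t
  proof (cases c)
    case Continuous
    define B where "B = csmul (- complex_of_real x) S + csmul (- \<i> * complex_of_real t) (S ** S ** JJ)"
    have "csmul (- complex_of_real x) S' + csmul (- \<i> * complex_of_real t) (S' ** S' ** JJ)
        = Pi ** (- B) ** ?Pi"
      unfolding S'_def B_def using Continuous by (simp add: basic push csmul_simps)
    then have "Xi c JJ S' x t = Pi ** mexp (- B) ** ?Pi"
      using Continuous by (simp add: mexp_conj[OF Piinv])
    then show ?thesis using Continuous by (simp add: B_def mexp_inv mexp_invertible)
  next
    case SemiDiscrete
    have Si: "invertible S" using disc SemiDiscrete by simp
    have SSi: "S ** matrix_inv S = mat 1" "matrix_inv S ** S = mat 1" using Si by (simp_all add: inv_r inv_l)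
    define B where "B = csmul (- \<i> * complex_of_real t) ((S + matrix_inv S - mat 2) ** JJ)"
    define M where "M = mpowi S \<lfloor>x\<rfloor>"
    have Minv: "invertible M" unfolding M_def using Si by (simp add: mpowi_invertible)
    have "csmul (- \<i> * complex_of_real t) ((S' + matrix_inv S' - mat 2) ** JJ)
        = Pi ** (- B) ** ?Pi"
      unfolding B_def using SemiDiscrete iS' unfolding S'_def
      by (simp add: basic push csmul_simps JSi' mat2_left mat2_right)
    moreover have "mpowi S' \<lfloor>x\<rfloor> = Pi ** matrix_inv M ** ?Pi"
      unfolding S'_def M_def using SemiDiscrete Si Piinv
      by (simp add: mpowi_conj invertible_inv mpowi_inv)
    ultimately have X': "Xi c JJ S' x t = Pi ** matrix_inv M ** ?Pi ** (Pi ** matrix_inv (mexp B) ** ?Pi)"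
      using SemiDiscrete by (simp add: mexp_conj[OF Piinv] mexp_inv)
    have BS: "B ** S = S ** B" unfolding B_def
      by (simp add: basic push csmul_simps mat2_left mat2_right SSi)
    have "M ** mexp B = mexp B ** M"
      by (rule mexp_comm) (simp add: M_def mpowi_comm[OF Si BS])
    then have "Xi c JJ S' x t = Pi ** matrix_inv (M ** mexp B) ** ?Pi"
      unfolding X' by (rule conj_inv_comm[OF Piinv Minv mexp_invertible])
    then show ?thesis using SemiDiscrete Minv
      by (simp add: M_def B_def invertible_mult mexp_invertible)
  next
    case FullyDiscrete
    have Si: "invertible S" using disc FullyDiscrete by simp
    have SSi: "S ** matrix_inv S = mat 1" "matrix_inv S ** S = mat 1" using Si by (simp_all add: inv_r inv_l)
    define Am where "Am = mat 1 - csmul \<i> (JJ ** (mat 1 - S))"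
    define Bm where "Bm = mat 1 + csmul \<i> (JJ ** (mat 1 - matrix_inv S))"
    define R where "R = Bm ** matrix_inv Am"
    have Ai: "invertible Am" and Bi: "invertible Bm" using ok FullyDiscrete unfolding Am_def Bm_def by auto
    have Ri: "invertible R" unfolding R_def using Ai Bi by (simp add: invertible_mult invertible_inv)
    have iR: "matrix_inv R = Am ** matrix_inv Bm" unfolding R_def using Ai Bi
      by (simp add: inv_mult invertible_inv inv_inv)
    have R': "(mat 1 + csmul \<i> (JJ ** (mat 1 - matrix_inv S')))
            ** matrix_inv (mat 1 - csmul \<i> (JJ ** (mat 1 - S')))
            = Pi ** matrix_inv R ** ?Pi"
      using A1 A2 FullyDiscrete Piinv Bi
      by (simp add: iR Am_def[symmetric] Bm_def[symmetric] inv_mult invertible_mult invertible_inv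
          inv_inv matrix_mul_assoc cancel2)
    define M where "M = mpowi S \<lfloor>x\<rfloor>"
    define N where "N = mpowi R \<lfloor>t\<rfloor>"
    have Minv: "invertible M" unfolding M_def using Si by (simp add: mpowi_invertible)
    have Ninv: "invertible N" unfolding N_def using Ri by (simp add: mpowi_invertible)
    have "mpowi S' \<lfloor>x\<rfloor> = Pi ** matrix_inv M ** ?Pi"
      unfolding S'_def M_def using FullyDiscrete Si Piinv
      by (simp add: mpowi_conj invertible_inv mpowi_inv)
    moreover have "mpowi (Pi ** matrix_inv R ** ?Pi) \<lfloor>t\<rfloor> = Pi ** matrix_inv N ** ?Pi"
      unfolding N_def using Ri Piinv
      by (simp add: mpowi_conj invertible_inv mpowi_inv)
    ultimately have X': "Xi c JJ S' x t = Pi ** matrix_inv M ** ?Pi ** (Pi ** matrix_inv N ** ?Pi)"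
      using FullyDiscrete R' by simp
    have SA: "S ** Am = Am ** S" unfolding Am_def by (simp add: basic push csmul_simps)
    have SB: "S ** Bm = Bm ** S" unfolding Bm_def by (simp add: basic push csmul_simps SSi JSi' FullyDiscrete cancel1[OF Si] cancel2[OF Si])
    have SR: "S ** R = R ** S" unfolding R_def
      by (metis SB comm_inv[OF Ai SA] matrix_mul_assoc)
    have RM: "R ** M = M ** R" unfolding M_def by (rule mpowi_comm[OF Si SR[symmetric]])
    have "M ** N = N ** M" unfolding N_def by (rule mpowi_comm[OF Ri RM[symmetric]])
    then have "Xi c JJ S' x t = Pi ** matrix_inv (M ** N) ** ?Pi"
      unfolding X' by (rule conj_inv_comm[OF Piinv Minv Ninv])
    then show ?thesis using FullyDiscrete Minv Ninv
      by (simp add: M_def N_def R_def Am_def Bm_def invertible_mult)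
  qed
  have g8: "nlsU c JJ S' K' U' V' x t = nlsU c JJ S K U V x t
             \<and> nlsD c JJ S' K' U' V' x t = nlsD c JJ S K U V x t + U ** matrix_inv K ** V"
    if Mi: "invertible (matrix_inv (Xi c JJ S x t) - K ** Xi c JJ S x t ** K)" for x t
  proof -
    define X where "X = Xi c JJ S x t"
    define Mm where "Mm = matrix_inv X - K ** X ** K"
    have Xi: "invertible X" using g7 unfolding X_def by blast
    have X': "Xi c JJ S' x t = Pi ** matrix_inv X ** ?Pi" using g7 unfolding X_def by blast
    have Mi': "invertible Mm" using Mi unfolding Mm_def X_def .
    have Xc: "X ** matrix_inv X = mat 1" "matrix_inv X ** X = mat 1"
      "Y ** X ** matrix_inv X = Y" "Y ** matrix_inv X ** X = Y" for Y :: "complex^'n^'k"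
      using Xi by (simp_all add: inv_r inv_l cancel1 cancel2)
    have Mc: "Mm ** matrix_inv Mm = mat 1" "matrix_inv Mm ** Mm = mat 1"
      "Y ** Mm ** matrix_inv Mm = Y" "Y ** matrix_inv Mm ** Mm = Y" for Y :: "complex^'n^'k"
      using Mi' by (simp_all add: inv_r inv_l cancel1 cancel2)
    have iX': "matrix_inv (Pi ** matrix_inv X ** ?Pi) = Pi ** X ** ?Pi"
      using Xi Piinv by (simp add: inv_mult invertible_mult invertible_inv inv_inv matrix_mul_assoc)
    have D': "matrix_inv (Pi ** matrix_inv X ** ?Pi) - K' ** (Pi ** matrix_inv X ** ?Pi) ** K'
        = - (Pi ** ?Ki ** Mm ** ?Ki ** ?Pi)"
      unfolding iX' K'_def Mm_def by (simp add: basic Xc)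
    have Q: "matrix_inv (- (Pi ** ?Ki ** Mm ** ?Ki ** ?Pi)) = - (Pi ** K ** matrix_inv Mm ** K ** ?Pi)"
      by (rule inv_unique) (simp add: basic Mc)
    have U: "nlsU c JJ S' K' U' V' x t = U ** matrix_inv Mm ** V"
      unfolding nlsU_def Let_def X' D' Q U'_def V'_def by (simp add: basic)
    have D: "nlsD c JJ S' K' U' V' x t = U ** ?Ki ** matrix_inv X ** matrix_inv Mm ** V"
      unfolding nlsD_def Let_def X' D' Q unfolding U'_def V'_def K'_def by (simp add: basic)
    have "U ** ?Ki ** V = U ** ?Ki ** Mm ** matrix_inv Mm ** V" by (simp add: Mc)
    also have "\<dots> = U ** ?Ki ** matrix_inv X ** matrix_inv Mm ** V - U ** X ** K ** matrix_inv Mm ** V"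
      unfolding Mm_def by (simp add: basic)
    finally have E: "U ** ?Ki ** V = U ** ?Ki ** matrix_inv X ** matrix_inv Mm ** V - U ** X ** K ** matrix_inv Mm ** V" .
    show ?thesis
      using U D E unfolding nlsU_def nlsD_def Let_def X_def[symmetric] Mm_def[symmetric]
      by (simp add: matrix_mul_assoc)
  qed
  show ?thesis using g1 g2 g3 g4 g5 g6 g7 g8 by blast
qed


end
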